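(* Let $k\ge4$ and let $C_k=\{x_{j_1}x_{j_2}\cdots x_{j_{k-3}}x_j^2:\ 1\le j_1<j_2<\dots<j_{k-3}<k,\ j_1\le j<k\}\subset P_{k-1}$. Then $C_k$ is exactly the set of admissible monomials $z$ in $P_{k-1}$ with weight vector $\omega(z)=(k-3,1,0,0,\dots)$. Consequently $\dim QP_{k-1}((k-3,1,0,\dots))=(k-3)\binom k2$.
   Context: $P_{k-1}=\mathbb F_2[x_1,\dots,x_{k-1}]$, $\deg x_i=1$, a module over the mod-2 Steenrod algebra $\mathcal A$, with augmentation ideal $\mathcal A^+$. For $a=\sum_i\alpha_i(a)2^i$ ($\alpha_i(a)\in\{0,1\}$) and a monomial $x=x_1^{a_1}\cdots x_{m}^{a_{m}}$, $\nu_j(x)=a_j$, the weight vector is $\omega(x)=(\omega_1(x),\omega_2(x),\dots)$ with $\omega_i(x)=\sum_j\alpha_{i-1}(\nu_j(x))$, and $\sigma(x)=(\nu_1(x),\dots,\nu_m(x))$. Weight vectors and sigma vectors are ordered left-lexicographically. For monomials $x,y$ of the same degree, $x<y$ iff $\omega(x)<\omega(y)$, or $\omega(x)=\omega(y)$ and $\sigma(x)<\sigma(y)$. A monomial $x$ is inadmissible if there are monomials $y_1,\dots,y_m$ with $y_t<x$ for all $t$ and $x-\sum_t y_t\in\mathcal A^+P_{k-1}$; otherwise it is admissible. For a weight vector $\omega$ (eventually-zero sequence, $\deg\omega=\sum_i2^{i-1}\omega_i$), $P(\omega)$ is spanned by monomials $y$ with $\deg y=\deg\omega$ and $\omega(y)\le\omega$,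 $P^-(\omega)$ by those with $\omega(y)<\omega$, and $QP_{k-1}(\omega)=P_{k-1}(\omega)/\big((\mathcal A^+P_{k-1}\cap P_{k-1}(\omega))+P_{k-1}^-(\omega)\big)$. *)

theory Defs
  imports Complex_Main "HOL-Library.Z2" "HOL-Library.Function_Algebras"
begin

text \<open>Monomials x_1^a_1 ... x_m^a_m are exponent vectors (variable j has exponent x j);
  a monomial of P_m has nonzero exponents only at variables 1..m.
  Polynomials over F_2 (= bit) are coefficient functions mono => bit.\<close>

type_synonym mono = "nat \<Rightarrow> nat"
type_synonym poly = "mono \<Rightarrow> bit"

definition Pmonos :: "nat \<Rightarrow> mono set" where
  "Pmonos m = {x. \<forall>j. x j \<noteq> 0 \<longrightarrow> 1 \<le> j \<and> j \<le> m}"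

definition mdeg :: "nat \<Rightarrow> mono \<Rightarrow> nat" where
  "mdeg m x = (\<Sum>j\<in>{1..m}. x j)"

definition mpoly :: "mono \<Rightarrow> poly" where
  "mpoly x = (\<lambda>y. if y = x then 1 else 0)"

definition scl :: "bit \<Rightarrow> poly \<Rightarrow> poly" where
  "scl c f = (\<lambda>y. c * f y)"

text \<open>Steenrod square Sq^i on a monomial of P_m (Cartan formula and
  Sq^i(x_j^a) = binom(a,i) x_j^(a+i)).\<close>
definition Sq :: "nat \<Rightarrow> nat \<Rightarrow> mono \<Rightarrow> poly" where
  "Sq m i x = (\<lambda>y. if y \<in> Pmonos m \<and> (\<forall>j. x j \<le> y j) \<and> mdeg m y = mdeg m x + i
       then of_nat (\<Prod>j\<in>{1..m}. (x j choose (y j - x j))) else 0)"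

text \<open>A^+ P_m: since A is generated by the Sq^i, A^+ P_m is the sum of the images of
  Sq^i, i > 0, i.e. the span of Sq^i applied to monomials.\<close>
definition Aplus :: "nat \<Rightarrow> poly set" where
  "Aplus m = module.span scl {Sq m i x | i x. 0 < i \<and> x \<in> Pmonos m}"

definition alpha :: "nat \<Rightarrow> nat \<Rightarrow> nat" where
  "alpha t a = (a div 2 ^ t) mod 2"

text \<open>Weight vector, shifted to index 0: omega m x t = omega_(t+1)(x).\<close>
definition omega :: "nat \<Rightarrow> mono \<Rightarrow> nat \<Rightarrow> nat" where
  "omega m x t = (\<Sum>j\<in>{1..m}. alpha t (x j))"

definition lexless :: "(nat \<Rightarrow> nat) \<Rightarrow> (nat \<Rightarrow> nat) \<Rightarrow> bool" where
  "lexless v w \<longleftrightarrow> (\<exists>t. (\<forall>s<t. v s = w s) \<and> v t < w t)"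

definition mless :: "nat \<Rightarrow> mono \<Rightarrow> mono \<Rightarrow> bool" where
  "mless m x y \<longleftrightarrow> mdeg m x = mdeg m y \<and>
     (lexless (omega m x) (omega m y) \<or> (omega m x = omega m y \<and> lexless x y))"

definition inadmissible :: "nat \<Rightarrow> mono \<Rightarrow> bool" where
  "inadmissible m x \<longleftrightarrow> x \<in> Pmonos m \<and> (\<exists>Y. finite Y \<and> Y \<subseteq> Pmonos m \<and> (\<forall>y\<in>Y. mless m y x) \<and>
       mpoly x - (\<Sum>y\<in>Y. mpoly y) \<in> Aplus m)"

definition admissible :: "nat \<Rightarrow> mono \<Rightarrow> bool" where
  "admissible m x \<longleftrightarrow> x \<in> Pmonos m \<and> \<not> inadmissible m x"

definition wdeg :: "(nat \<Rightarrow> nat) \<Rightarrow> nat" where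
  "wdeg w = (\<Sum>t\<in>{t. w t \<noteq> 0}. 2 ^ t * w t)"

definition Pw :: "nat \<Rightarrow> (nat \<Rightarrow> nat) \<Rightarrow> poly set" where
  "Pw m w = module.span scl {mpoly y | y. y \<in> Pmonos m \<and> mdeg m y = wdeg w \<and>
      (lexless (omega m y) w \<or> omega m y = w)}"

definition Pw_minus :: "nat \<Rightarrow> (nat \<Rightarrow> nat) \<Rightarrow> poly set" where
  "Pw_minus m w = module.span scl {mpoly y | y. y \<in> Pmonos m \<and> mdeg m y = wdeg w \<and>
      lexless (omega m y) w}"

text \<open>dim QP_m(w) = dim P_m(w) - dim of the subspace ((A^+P_m \<inter> P_m(w)) + P_m^-(w)),
  which is contained in P_m(w) (all finite dimensional).\<close>
definition dimQP :: "nat \<Rightarrow> (nat \<Rightarrow> nat) \<Rightarrow> nat" where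
  "dimQP m w = vector_space.dim scl (Pw m w)
     - vector_space.dim scl (module.span scl ((Aplus m \<inter> Pw m w) \<union> Pw_minus m w))"

definition Cset :: "nat \<Rightarrow> mono set" where
  "Cset k = {x. \<exists>J j. J \<subseteq> {1..<k} \<and> card J = k - 3 \<and> Min J \<le> j \<and> j < k \<and>
      x = (\<lambda>i. (if i \<in> J then 1 else 0) + (if i = j then 2 else 0))}"

end

theory Submission
  imports Defs
begin


declare add_bit_eq_xor[simp del] mult_bit_eq_and[simp del]

interpretation V: vector_space scl
  by unfold_locales (auto simp: scl_def fun_eq_iff algebra_simps)

lemma sum_fun_apply: "(\<Sum>a\<in>A. f a) y = (\<Sum>a\<in>A. (f a y :: bit))"
  by (induction A rule: infinite_finite_induct) auto

lemma sum_mpoly: "finite A \<Longrightarrow> (\<Sum>y\<in>A. mpoly y) = (\<lambda>y'. if y' \<in> A then 1 else 0)"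
proof (induction A rule: finite_induct)
  case (insert x F)
  show ?case
  proof
    fix y' show "(\<Sum>y\<in>insert x F. mpoly y) y' = (if y' \<in> insert x F then 1 else 0)"
      using insert by (auto simp: mpoly_def)
  qed
qed (auto simp: mpoly_def)

lemma bit_minus_fun: "(f::poly) - g = f + g"
  by (auto simp: fun_eq_iff)

lemma of_nat_bit: "(of_nat n :: bit) = (if even n then 0 else 1)"
  by (metis even_of_nat_iff odd_one bit_not_zero_iff even_zero)




lemma binom_odd_le: "odd (a choose c) \<Longrightarrow> c \<le> (a::nat)"
  by (metis binomial_eq_0 even_zero not_le)

lemma binom_case: assumes "a \<le> b" "b \<le> (3::nat)" "odd (a choose (b - a))"
  shows "a = b \<or> (b = 2 \<and> a = 1)"
proof -
  have "b - a \<le> a" using binom_odd_le[OF assms(3)] .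
  moreover have "\<not> (a = 2 \<and> b = 3)" using assms(3) by auto
  ultimately show ?thesis using assms(1,2) by linarith
qed

lemma Sq_nonzero:
  assumes "Sq m i z x \<noteq> 0"
  shows "x \<in> Pmonos m" "\<forall>l. z l \<le> x l" "mdeg m x = mdeg m z + i"
    "\<forall>l\<in>{1..m}. odd (z l choose (x l - z l))"
proof -
  have c: "x \<in> Pmonos m \<and> (\<forall>j. z j \<le> x j) \<and> mdeg m x = mdeg m z + i"
   and o: "odd (\<Prod>j\<in>{1..m}. (z j choose (x j - z j)))"
    using assms unfolding Sq_def by (auto split: if_splits simp: of_nat_bit)
  then show "x \<in> Pmonos m" "\<forall>l. z l \<le> x l" "mdeg m x = mdeg m z + i" by auto
  show "\<forall>l\<in>{1..m}. odd (z l choose (x l - z l))" using o by (simp add: even_prod_iff)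
qed

lemma mdeg_upd: assumes "p \<in> {1..m}" shows "mdeg m (u(p:=v)) + u p = mdeg m u + v"
proof -
  have e: "(\<Sum>l\<in>{1..m}-{p}. (u(p:=v)) l) = (\<Sum>l\<in>{1..m}-{p}. u l)"
    by (rule sum.cong) auto
  have "mdeg m (u(p:=v)) = v + (\<Sum>l\<in>{1..m}-{p}. u l)"
    unfolding mdeg_def using assms by (simp add: sum.remove[of _ p] e)
  moreover have "mdeg m u = u p + (\<Sum>l\<in>{1..m}-{p}. u l)"
    unfolding mdeg_def using assms by (simp add: sum.remove[of _ p])
  ultimately show ?thesis by simp
qed

lemma mdeg_cong: "(\<forall>l\<in>{1..m}. z l = x l) \<Longrightarrow> mdeg m z = mdeg m x"
  unfolding mdeg_def by (rule sum.cong) auto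

lemma Pmonos_out: "x \<in> Pmonos m \<Longrightarrow> l \<notin> {1..m} \<Longrightarrow> x l = 0"
  unfolding Pmonos_def by auto

lemma Sq_sq:
  assumes u: "u \<in> Pmonos m" "\<forall>l. u l \<le> 1" and p: "p \<in> {1..m}" "u p = 1" and i: "0 < i"
  shows "Sq m i z (u(p:=2)) = (if z = u \<and> i = 1 then 1 else 0)"
proof (cases "z = u \<and> i = 1")
  case True
  have dg: "mdeg m (u(p:=2)) = mdeg m u + 1" using mdeg_upd[OF p(1), of u 2] p by simp
  have pm: "u(p:=2) \<in> Pmonos m" using u p unfolding Pmonos_def by auto
  have le: "\<forall>j. u j \<le> (u(p:=2)) j" using u p by auto
  have pr: "(\<Prod>j\<in>{1..m}. (u j choose ((u(p:=2)) j - u j))) = 1"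
  proof (rule prod.neutral, intro ballI)
    fix j assume "j \<in> {1..m}"
    show "u j choose ((u(p:=2)) j - u j) = 1"
      using p by (cases "j = p") auto
  qed
  show ?thesis using True dg pm le pr unfolding Sq_def by simp
next
  case False
  show ?thesis
  proof (rule ccontr)
    assume ne: "Sq m i z (u(p:=2)) \<noteq> (if z = u \<and> i = 1 then 1 else 0)"
    hence nz: "Sq m i z (u(p:=2)) \<noteq> 0" using False by auto
    note S = Sq_nonzero[OF nz]
    have outz: "\<forall>l. l \<notin> {1..m} \<longrightarrow> z l = 0"
      using S(1,2) Pmonos_out by (metis le_zero_eq)
    have inl: "\<forall>l\<in>{1..m}. l \<noteq> p \<longrightarrow> z l = u l"
    proof (intro ballI impI)
      fix l assume l: "l \<in> {1..m}" "l \<noteq> p"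
      have "z l \<le> u l" using S(2) l by (metis fun_upd_other)
      moreover have "odd (z l choose (u l - z l))" using bspec[OF S(4) l(1)] l(2) by simp
      ultimately show "z l = u l" using binom_odd_le[of "z l" "u l - z l"] u(2)[rule_format, of l] by linarith
    qed
    have zp: "z p = 1 \<or> z p = 2"
    proof -
      have "z p \<le> 2" using S(2) by (metis fun_upd_same)
      moreover have "odd (z p choose (2 - z p))" using S(4) p by (metis fun_upd_same)
      ultimately show ?thesis using binom_odd_le[of "z p" "2 - z p"] by (cases "z p") auto
    qed
    show False
    proof (cases "z p = 1")
      case True
      have "z = u"
      proof
        fix l show "z l = u l"
          using inl outz True p Pmonos_out[OF u(1)] by (cases "l = p"; cases "l \<in> {1..m}") auto
      qed
      then have "i = 1" using S(3) mdeg_upd[OF p(1), of u 2] p by simp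
      then show False using False \<open>z = u\<close> by auto
    next
      case False
      hence "z p = 2" using zp by auto
      hence "\<forall>l\<in>{1..m}. z l = (u(p:=2)) l" using inl by auto
      hence "mdeg m z = mdeg m (u(p:=2))" by (rule mdeg_cong)
      then show False using S(3) i by simp
    qed
  qed
qed

lemma Sq_cube:
  assumes x: "\<forall>l\<in>{1..m}. x l \<noteq> 2 \<and> x l \<le> 3" and i: "0 < i"
  shows "Sq m i z x = 0"
proof (rule ccontr)
  assume nz: "Sq m i z x \<noteq> 0"
  note S = Sq_nonzero[OF nz]
  have "\<forall>l\<in>{1..m}. z l = x l"
  proof
    fix l assume l: "l \<in> {1..m}"
    show "z l = x l" using binom_case[of "z l" "x l"] S(2,4) x l by auto
  qed
  hence "mdeg m z = mdeg m x" by (rule mdeg_cong)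
  then show False using S(3) i by simp
qed

lemma Sq1_ind:
  assumes u: "u \<in> Pmonos m" "\<forall>l. u l \<le> 1"
  shows "Sq m 1 u y = (if \<exists>p\<in>{1..m}. u p = 1 \<and> y = u(p:=2) then 1 else 0)"
proof (cases "\<exists>p\<in>{1..m}. u p = 1 \<and> y = u(p:=2)")
  case True
  then obtain p where p: "p \<in> {1..m}" "u p = 1" "y = u(p:=2)" by auto
  show ?thesis using Sq_sq[OF u p(1,2), of 1 u] True p(3) by simp
next
  case False
  show ?thesis
  proof (rule ccontr)
    assume "Sq m 1 u y \<noteq> (if \<exists>p\<in>{1..m}. u p = 1 \<and> y = u(p:=2) then 1 else 0)"
    moreover have "(if \<exists>p\<in>{1..m}. u p = 1 \<and> y = u(p:=2) then 1 else 0) = (0::bit)"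
      by (rule if_not_P) (rule False)
    ultimately have nz: "Sq m 1 u y \<noteq> 0" by simp
    note S = Sq_nonzero[OF nz]
    have b: "\<forall>l\<in>{1..m}. y l \<le> 2 * u l"
    proof
      fix l assume l: "l \<in> {1..m}"
      have "y l - u l \<le> u l" using S(4) l binom_odd_le by blast
      thus "y l \<le> 2 * u l" by linarith
    qed
    have "\<exists>p\<in>{1..m}. u p < y p"
    proof (rule ccontr)
      assume "\<not> ?thesis"
      hence "\<forall>l\<in>{1..m}. u l = y l" using S(2) by (meson le_neq_implies_less)
      hence "mdeg m u = mdeg m y" by (rule mdeg_cong)
      thus False using S(3) by simp
    qed
    then obtain p where p: "p \<in> {1..m}" "u p < y p" by auto
    have bp: "y p \<le> 2 * u p" "u p \<le> 1" using b p u(2) by auto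
    have up: "u p = 1" "y p = 2" using bp p(2) by linarith+
    have "\<forall>l\<in>{1..m}. y l = (u(p:=2)) l"
    proof (rule ccontr)
      assume "\<not> ?thesis"
      then obtain q where q: "q \<in> {1..m}" "y q \<noteq> (u(p:=2)) q" by auto
      have ge: "\<forall>l\<in>{1..m}. (u(p:=2)) l \<le> y l" using S(2) up by auto
      have lt: "(u(p:=2)) q < y q" using le_neq_trans[OF bspec[OF ge q(1)]] q(2) by metis
      have "mdeg m (u(p:=2)) < mdeg m y" unfolding mdeg_def
        using sum_strict_mono_ex1[of "{1..m}" "u(p:=2)" y] ge q lt by blast
      thus False using S(3) mdeg_upd[OF p(1), of u 2] up by simp
    qed
    hence "y = u(p:=2)"
    proof -
      assume h: "\<forall>l\<in>{1..m}. y l = (u(p:=2)) l"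
      show ?thesis
      proof
        fix l show "y l = (u(p:=2)) l"
          using h Pmonos_out[OF S(1)] Pmonos_out[OF u(1)] p by (cases "l \<in> {1..m}") auto
      qed
    qed
    thus False using False p up by auto
  qed
qed




definition mk :: "nat set \<Rightarrow> nat \<Rightarrow> mono" where
  "mk J j = (\<lambda>i. (if i \<in> J then 1 else 0) + (if i = j then 2 else 0))"

definition ind :: "nat set \<Rightarrow> mono" where
  "ind S = (\<lambda>i. if i \<in> S then 1 else 0)"

lemma mk_notin: "j \<notin> J \<Longrightarrow> mk J j = (ind (insert j J))(j := 2)"
  by (auto simp: mk_def ind_def fun_eq_iff)

lemma ind_Pmonos: "S \<subseteq> {1..m} \<Longrightarrow> ind S \<in> Pmonos m"
  by (auto simp: ind_def Pmonos_def)

lemma ind_le1: "\<forall>l. ind S l \<le> 1"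
  by (auto simp: ind_def)

lemma mk_Pmonos: "J \<subseteq> {1..m} \<Longrightarrow> j \<in> {1..m} \<Longrightarrow> mk J j \<in> Pmonos m"
  by (auto simp: mk_def Pmonos_def)

lemma alpha_small: assumes "b0 \<le> 1" "b1 \<le> 1"
  shows "alpha t (b0 + 2 * b1) = (if t = 0 then b0 else if t = 1 then b1 else 0)"
proof (cases t)
  case 0 thus ?thesis using assms by (auto simp: alpha_def)
next
  case (Suc s)
  show ?thesis
  proof (cases s)
    case 0 thus ?thesis using assms Suc by (auto simp: alpha_def)
  next
    case (Suc r)
    have "(2::nat) ^ t = 4 * 2 ^ r" using \<open>t = Suc s\<close> Suc by simp
    moreover have "b0 + 2 * b1 < 4" using assms by linarith
    moreover have "(1::nat) \<le> 2 ^ r" by simp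
    ultimately have "b0 + 2 * b1 < 2 ^ t" by linarith
    hence "(b0 + 2 * b1) div 2 ^ t = 0" by (simp add: div_less)
    thus ?thesis using \<open>t = Suc s\<close> Suc by (simp add: alpha_def)
  qed
qed

lemma sum_ind_card: "finite A \<Longrightarrow> (\<Sum>l\<in>A. if l \<in> J then 1 else 0) = card (A \<inter> J)"
  by (simp add: sum.If_cases)

lemma omega_mk: assumes "J \<subseteq> {1..m}" "j \<in> {1..m}"
  shows "omega m (mk J j) = (\<lambda>t. if t = 0 then card J else if t = 1 then 1 else 0)"
proof
  fix t
  have a: "alpha t (mk J j l) = (if t = 0 then (if l \<in> J then 1 else 0) else if t = 1 then (if l = j then 1 else 0) else 0)" for l
    using alpha_small[of "if l \<in> J then 1 else 0" "if l = j then 1 else 0" t]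
    unfolding mk_def by (simp add: if_distrib cong: if_cong)
  have "omega m (mk J j) t = (\<Sum>l\<in>{1..m}. if t = 0 then (if l \<in> J then 1 else 0) else if t = 1 then (if l = j then 1 else 0) else 0)"
    unfolding omega_def using a by simp
  also have "\<dots> = (if t = 0 then card J else if t = 1 then 1 else 0)"
  proof -
    have "{1..m} \<inter> J = J" using assms by auto
    then show ?thesis using assms(2) by (simp add: sum_ind_card)
  qed
  finally show "omega m (mk J j) t = (if t = 0 then card J else if t = 1 then 1 else 0)" .
qed

lemma mdeg_mk: assumes "J \<subseteq> {1..m}" "j \<in> {1..m}"
  shows "mdeg m (mk J j) = card J + 2"
proof -
  have "mdeg m (mk J j) = (\<Sum>l\<in>{1..m}. if l \<in> J then 1 else 0) + (\<Sum>l\<in>{1..m}. if l = j then 2 else 0)"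
    unfolding mdeg_def mk_def by (simp add: sum.distrib)
  also have "\<dots> = card J + 2"
  proof -
    have "{1..m} \<inter> J = J" using assms by auto
    then show ?thesis using assms(2) by (simp add: sum_ind_card)
  qed
  finally show ?thesis .
qed

lemma mk_inj: assumes "mk J j = mk J' j'" shows "J = J'" "j = j'"
proof -
  have "J = {l. odd (mk J j l)}" by (auto simp: mk_def)
  moreover have "J' = {l. odd (mk J' j' l)}" by (auto simp: mk_def)
  ultimately show "J = J'" using assms by simp
  have "j = j' \<or> (mk J j j \<ge> 2 \<and> \<not> mk J' j' j \<ge> 2)" by (auto simp: mk_def)
  then show "j = j'" using assms by auto
qed

lemma lexless_irrefl: "\<not> lexless v v"
  by (auto simp: lexless_def)

lemma lexless_asym: assumes "lexless v w" shows "\<not> lexless w v"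
proof
  assume "lexless w v"
  then obtain t2 where t2: "\<forall>s<t2. w s = v s" "w t2 < v t2" by (auto simp: lexless_def)
  obtain t1 where t1: "\<forall>s<t1. v s = w s" "v t1 < w t1" using assms by (auto simp: lexless_def)
  show False
  proof (cases t1 t2 rule: linorder_cases)
    case less thus ?thesis using t1 t2 by (metis less_asym)
  next
    case equal thus ?thesis using t1 t2 by simp
  next
    case greater thus ?thesis using t1 t2 by (metis less_asym)
  qed
qed

lemma mless_irrefl: "\<not> mless m x x"
  by (auto simp: mless_def lexless_irrefl)

lemma pos_bit: "0 < (b::nat) \<Longrightarrow> \<exists>s. odd (b div 2 ^ s)"
proof (induction b rule: less_induct)
  case (less b)
  show ?case
  proof (cases "odd b")
    case True thus ?thesis by (rule_tac x=0 in exI) simp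
  next
    case False
    then obtain c where c: "b = 2 * c" by (auto elim: evenE)
    hence "0 < c" "c < b" using less.prems by auto
    then obtain s where "odd (c div 2 ^ s)" using less.IH by blast
    hence "odd (b div 2 ^ Suc s)" using c by (simp add: div_mult2_eq)
    thus ?thesis by blast
  qed
qed

lemma big_bit: assumes "4 \<le> (a::nat)" shows "\<exists>t\<ge>2. alpha t a \<noteq> 0"
proof -
  have "0 < a div 4" using assms by simp
  then obtain s where "odd (a div 4 div 2 ^ s)" using pos_bit by blast
  moreover have "a div 4 div 2 ^ s = a div 2 ^ (s + 2)"
    by (simp add: div_mult2_eq power_add mult.commute)
  ultimately show ?thesis unfolding alpha_def by (rule_tac x="s+2" in exI) (simp add: odd_iff_mod_2_eq_one)
qed

lemma sum01_card: assumes "finite A" "\<forall>l\<in>A. f l \<le> (1::nat)"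
  shows "(\<Sum>l\<in>A. f l) = card {l\<in>A. f l = 1}"
proof -
  have "(\<Sum>l\<in>A. f l) = (\<Sum>l\<in>A. if f l = 1 then 1 else 0)"
    by (rule sum.cong) (use assms(2) in \<open>auto simp: le_Suc_eq\<close>)
  also have "\<dots> = card {l\<in>A. f l = 1}"
    using assms(1) by (simp add: sum.If_cases Int_def)
  finally show ?thesis .
qed

lemma mono_structure:
  assumes z: "z \<in> Pmonos m" and om: "omega m z = (\<lambda>t. if t = 0 then c else if t = 1 then 1 else 0)"
  shows "\<exists>J j. J \<subseteq> {1..m} \<and> j \<in> {1..m} \<and> card J = c \<and> z = mk J j"
proof -
  have small: "z l < 4" if l: "l \<in> {1..m}" for l
  proof (rule ccontr)
    assume "\<not> z l < 4"
    then obtain t where t: "t \<ge> 2" "alpha t (z l) \<noteq> 0" using big_bit by (meson not_less)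
    have "omega m z t = 0" using om t(1) by simp
    hence "\<forall>l\<in>{1..m}. alpha t (z l) = 0" unfolding omega_def by simp
    thus False using t(2) l by auto
  qed
  define J where "J = {l\<in>{1..m}. alpha 0 (z l) = 1}"
  define K where "K = {l\<in>{1..m}. alpha 1 (z l) = 1}"
  have le1: "alpha t a \<le> 1" "alpha t a \<le> Suc 0" for t a unfolding alpha_def by simp_all
  have cJ: "card J = c"
  proof -
    have "omega m z 0 = card J" unfolding omega_def J_def by (rule sum01_card) (auto simp: le1)
    thus ?thesis using om by simp
  qed
  have "card K = 1"
  proof -
    have "omega m z 1 = card K" unfolding omega_def K_def by (rule sum01_card) (auto simp: le1)
    thus ?thesis using om by simp
  qed
  then obtain j where K: "K = {j}" using card_1_singletonE by blast
  have j: "j \<in> {1..m}" using K K_def by auto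
  have "z = mk J j"
  proof
    fix l
    show "z l = mk J j l"
    proof (cases "l \<in> {1..m}")
      case False
      then show ?thesis using Pmonos_out[OF z] j J_def by (auto simp: mk_def)
    next
      case True
      have lK: "l \<in> K \<longleftrightarrow> l = j" using K by auto
      have "z l = 0 \<or> z l = 1 \<or> z l = 2 \<or> z l = 3" using small[OF True] by linarith
      then show ?thesis using True lK unfolding mk_def J_def K_def
        by (auto simp: alpha_def)
    qed
  qed
  moreover have "J \<subseteq> {1..m}" using J_def by auto
  ultimately show ?thesis using j cJ by blast
qed




lemma kill_span:
  assumes W: "finite W" and G: "\<forall>g\<in>G. (\<Sum>y\<in>W. g y) = (0::bit)" and f: "f \<in> V.span G"
  shows "(\<Sum>y\<in>W. f y) = 0"
proof -
  let ?S = "{f::poly. (\<Sum>y\<in>W. f y) = 0}"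
  have "V.subspace ?S"
    unfolding V.subspace_def scl_def
    by (auto simp: sum.distrib sum_distrib_left[symmetric])
  moreover have "G \<subseteq> ?S" using G by auto
  ultimately have "V.span G \<subseteq> ?S" by (rule V.span_minimal[rotated])
  thus ?thesis using f by auto
qed

lemma sum2: "p \<noteq> q \<Longrightarrow> (\<Sum>y\<in>{p,q}. g y) = g p + (g q :: bit)"
  by simp

lemma Sq_in_Aplus: "0 < i \<Longrightarrow> z \<in> Pmonos m \<Longrightarrow> Sq m i z \<in> Aplus m"
  unfolding Aplus_def by (rule V.span_base) auto

lemma mpoly_minus_ind: "finite Y \<Longrightarrow> (mpoly x - (\<Sum>y\<in>Y. mpoly y)) w = (if w = x then 1 else 0) - (if w \<in> Y then 1 else 0)"
  by (simp add: sum_mpoly) (simp add: mpoly_def)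

lemma Cset_functional:
  assumes J: "J \<subseteq> {1..m}" "J \<noteq> {}" and j: "Min J \<le> j" "j \<le> m"
  shows "\<exists>W. finite W \<and> mk J j \<in> W \<and> (\<forall>f\<in>Aplus m. (\<Sum>w\<in>W. f w) = 0) \<and>
     (\<forall>w\<in>W - {mk J j}. omega m w = omega m (mk J j) \<and> lexless (mk J j) w \<and>
        (\<exists>J' j'. w = mk J' j' \<and> j' < Min J'))"
proof -
  have fJ: "finite J" using J finite_subset by blast
  have a1: "Min J \<in> J" using Min_in[OF fJ J(2)] .
  hence j1: "j \<in> {1..m}" using J j by auto
  show ?thesis
  proof (cases "j \<in> J")
    case True
    have gen: "\<forall>g\<in>{Sq m i z | i z. 0 < i \<and> z \<in> Pmonos m}. (\<Sum>y\<in>{mk J j}. g y) = 0"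
    proof (clarsimp)
      fix i z assume "0 < (i::nat)"
      moreover have "\<forall>l\<in>{1..m}. mk J j l \<noteq> 2 \<and> mk J j l \<le> 3" using True by (auto simp: mk_def)
      ultimately show "Sq m i z (mk J j) = 0" using Sq_cube by blast
    qed
    have "\<forall>f\<in>Aplus m. (\<Sum>w\<in>{mk J j}. f w) = 0"
    proof
      fix f assume "f \<in> Aplus m"
      then show "(\<Sum>w\<in>{mk J j}. f w) = 0"
        by (intro kill_span[OF _ gen]) (simp_all add: Aplus_def)
    qed
    thus ?thesis by (intro exI[of _ "{mk J j}"]) auto
  next
    case False
    define a where "a = Min J"
    define u where "u = ind (insert j J)"
    have aj: "a < j" using a1 j(1) False a_def by (metis le_neq_implies_less)
    have x: "mk J j = u(j:=2)" using mk_notin[OF False] u_def by simp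
    have ajn: "a \<notin> insert j (J - {a})" using aj by auto
    have x': "mk (insert j (J - {a})) a = u(a:=2)"
      using mk_notin[OF ajn] u_def a1 a_def by (simp add: insert_absorb insert_commute)
    have uP: "u \<in> Pmonos m" using u_def ind_Pmonos J j1 by auto
    have ua: "u a = 1" "u j = 1" using u_def a1 a_def by (auto simp: ind_def)
    have aR: "a \<in> {1..m}" using a1 a_def J by auto
    have neq: "u(j:=2) \<noteq> u(a:=2)"
    proof
      assume "u(j:=2) = u(a:=2)"
      hence "(u(j:=2)) j = (u(a:=2)) j" by simp
      thus False using aj ua by simp
    qed
    let ?W = "{u(j:=2), u(a:=2)}"
    have gen: "\<forall>g\<in>{Sq m i z | i z. 0 < i \<and> z \<in> Pmonos m}. (\<Sum>y\<in>?W. g y) = 0"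
    proof (clarsimp)
      fix i z assume i: "0 < (i::nat)"
      have "Sq m i z (u(j:=2)) = Sq m i z (u(a:=2))"
        using Sq_sq[OF uP _ _ ua(2) i] Sq_sq[OF uP _ _ ua(1) i] ind_le1 u_def j1 aR by simp
      thus "(\<Sum>y\<in>?W. Sq m i z y) = 0" using sum2[OF neq, of "Sq m i z"] by simp
    qed
    have kill: "\<forall>f\<in>Aplus m. (\<Sum>w\<in>?W. f w) = 0"
    proof
      fix f assume "f \<in> Aplus m"
      then show "(\<Sum>w\<in>?W. f w) = 0"
        by (intro kill_span[OF _ gen]) (simp_all add: Aplus_def)
    qed
    have c: "card (insert j (J - {a})) = card J"
    proof -
      have "card (insert j (J - {a})) = Suc (card (J - {a}))"
        using fJ False by (simp add: card_insert_disjoint)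
      moreover have "card (J - {a}) = card J - 1" using fJ a1 a_def by (simp add: card_Diff_singleton)
      moreover have "card J > 0" using fJ J(2) by (simp add: card_gt_0_iff)
      ultimately show ?thesis by simp
    qed
    have JR: "insert j (J - {a}) \<subseteq> {1..m}" using J j1 by auto
    have om: "omega m (u(a:=2)) = omega m (u(j:=2))"
      unfolding x'[symmetric] x[symmetric] omega_mk[OF JR aR] omega_mk[OF J(1) j1] c ..
    have lx: "lexless (u(j:=2)) (u(a:=2))" unfolding lexless_def
    proof (rule exI[of _ a], intro conjI allI impI)
      fix s assume "s < a" thus "(u(j:=2)) s = (u(a:=2)) s" using aj by auto
    next
      show "(u(j:=2)) a < (u(a:=2)) a" using aj ua by simp
    qed
    have mn: "a < Min (insert j (J - {a}))"
    proof -
      have "finite (insert j (J - {a}))" using fJ by simp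
      hence "Min (insert j (J - {a})) \<in> insert j (J - {a})" by (rule Min_in) simp
      moreover have "\<forall>b\<in>J - {a}. a < b" using fJ a_def by (auto intro: le_neq_implies_less)
      ultimately show ?thesis using aj by auto
    qed
    have "\<forall>w\<in>?W - {mk J j}. omega m w = omega m (mk J j) \<and> lexless (mk J j) w \<and>
        (\<exists>J' j'. w = mk J' j' \<and> j' < Min J')"
      using x om lx x' mn neq by auto
    thus ?thesis using kill x by (intro exI[of _ ?W]) auto
  qed
qed

lemma Cset_admissible:
  assumes J: "J \<subseteq> {1..m}" "J \<noteq> {}" and j: "Min J \<le> j" "j \<le> m"
  shows "admissible m (mk J j)"
proof -
  have fJ: "finite J" using J finite_subset by blast
  have a1: "Min J \<in> J" using Min_in[OF fJ J(2)] .
  hence j1: "j \<in> {1..m}" using J j by auto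
  have xP: "mk J j \<in> Pmonos m" using mk_Pmonos[OF J(1) j1] .
  obtain W where W: "finite W" "mk J j \<in> W" "\<forall>f\<in>Aplus m. (\<Sum>w\<in>W. f w) = 0"
     "\<forall>w\<in>W - {mk J j}. omega m w = omega m (mk J j) \<and> lexless (mk J j) w"
    using Cset_functional[OF assms] by blast
  show ?thesis unfolding admissible_def inadmissible_def
  proof (intro conjI xP notI, elim conjE exE)
    fix Y assume Y: "finite Y" "Y \<subseteq> Pmonos m" "\<forall>y\<in>Y. mless m y (mk J j)"
      "mpoly (mk J j) - (\<Sum>y\<in>Y. mpoly y) \<in> Aplus m"
    let ?f = "mpoly (mk J j) - (\<Sum>y\<in>Y. mpoly y)"
    have xY: "mk J j \<notin> Y" using Y(3) mless_irrefl by blast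
    have z: "(\<Sum>w\<in>W. ?f w) = 0" using W(3) Y(4) by blast
    have r: "?f w = 0" if w: "w \<in> W - {mk J j}" for w
    proof -
      have "w \<notin> Y"
      proof
        assume "w \<in> Y"
        hence "mless m w (mk J j)" using Y(3) by auto
        moreover have "omega m w = omega m (mk J j)" "lexless (mk J j) w" using W(4) w by auto
        ultimately show False using lexless_asym lexless_irrefl unfolding mless_def by metis
      qed
      moreover have "w \<noteq> mk J j" using w by auto
      ultimately show ?thesis by (simp only: mpoly_minus_ind[OF Y(1)] if_False) simp
    qed
    have "(\<Sum>w\<in>W. ?f w) = ?f (mk J j) + (\<Sum>w\<in>W - {mk J j}. ?f w)"
      using W(1,2) by (rule sum.remove)
    also have "(\<Sum>w\<in>W - {mk J j}. ?f w) = 0" using r by simp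
    also have "?f (mk J j) = 1" using xY by (simp only: mpoly_minus_ind[OF Y(1)]) simp
    finally show False using z by simp
  qed
qed




lemma upd_mk: "p \<in> S \<Longrightarrow> (ind S)(p:=2) = mk (S - {p}) p"
  by (auto simp: ind_def mk_def fun_eq_iff)

lemma omega_upd: assumes "S \<subseteq> {1..m}" "p \<in> S"
  shows "omega m ((ind S)(p:=2)) = (\<lambda>t. if t = 0 then card S - 1 else if t = 1 then 1 else 0)"
proof -
  have f: "finite S" using assms(1) finite_subset by blast
  have "omega m ((ind S)(p:=2)) = (\<lambda>t. if t = 0 then card (S - {p}) else if t = 1 then 1 else 0)"
    unfolding upd_mk[OF assms(2)] by (rule omega_mk) (use assms in auto)
  moreover have cd: "card (S - {p}) = card S - 1" using f assms(2) by (simp add: card_Diff_singleton)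
  ultimately show ?thesis by (simp only: cd)
qed

lemma mdeg_upd2: assumes "S \<subseteq> {1..m}" "p \<in> S" "q \<in> S"
  shows "mdeg m ((ind S)(p:=2)) = mdeg m ((ind S)(q:=2))"
proof -
  have "mdeg m ((ind S)(p:=2)) + 1 = mdeg m (ind S) + 2"
    using mdeg_upd[of p m "ind S" 2] assms by (auto simp: ind_def)
  moreover have "mdeg m ((ind S)(q:=2)) + 1 = mdeg m (ind S) + 2"
    using mdeg_upd[of q m "ind S" 2] assms by (auto simp: ind_def)
  ultimately show ?thesis by simp
qed

lemma upd_Pmonos: "u \<in> Pmonos m \<Longrightarrow> p \<in> {1..m} \<Longrightarrow> u(p:=c) \<in> Pmonos m"
  by (auto simp: Pmonos_def)

lemma nonC:
  assumes J: "J \<subseteq> {1..m}" "J \<noteq> {}" and j: "j \<in> {1..m}" "j < Min J"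
  shows "mpoly (mk J j) = Sq m 1 (ind (insert j J)) + (\<Sum>i\<in>J. mpoly ((ind (insert j J))(i:=2)))"
    "inadmissible m (mk J j)"
proof -
  define u where "u = ind (insert j J)"
  have fJ: "finite J" using J finite_subset by blast
  have gt: "\<forall>i\<in>J. j < i" using j(2) fJ by (meson Min_le less_le_trans)
  hence jJ: "j \<notin> J" by auto
  have x: "mk J j = u(j:=2)" using mk_notin[OF jJ] u_def by simp
  define Y where "Y = (\<lambda>i. u(i:=2)) ` J"
  have u1: "u p = 1 \<longleftrightarrow> p \<in> insert j J" for p by (auto simp: u_def ind_def)
  have SR: "insert j J \<subseteq> {1..m}" using J j by auto
  have uP: "u \<in> Pmonos m" using ind_Pmonos[OF SR] u_def by simp
  have inj: "inj_on (\<lambda>i. u(i:=2)) J"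
  proof (rule inj_onI)
    fix i i' assume "i \<in> J" "i' \<in> J" "u(i:=2) = u(i':=2)"
    hence "(u(i:=2)) i = (u(i':=2)) i" by simp
    show "i = i'"
    proof (rule ccontr)
      assume "i \<noteq> i'"
      hence "(u(i':=2)) i = 1" using u1 \<open>i \<in> J\<close> by simp
      thus False using \<open>(u(i:=2)) i = (u(i':=2)) i\<close> by simp
    qed
  qed
  have sY: "(\<Sum>y\<in>Y. mpoly y) = (\<Sum>i\<in>J. mpoly (u(i:=2)))"
    unfolding Y_def by (rule sum.reindex_cong[OF inj]) auto
  have fY: "finite Y" using fJ Y_def by simp
  have xY: "u(j:=2) \<notin> Y"
  proof
    assume "u(j:=2) \<in> Y"
    then obtain i where i: "i \<in> J" "u(j:=2) = u(i:=2)" unfolding Y_def by blast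
    hence "(u(j:=2)) j = (u(i:=2)) j" by simp
    moreover have "i \<noteq> j" using i(1) jJ by blast
    ultimately have "2 = u j" by simp
    thus False using u1[of j] by simp
  qed
  have E: "mpoly (u(j:=2)) - (\<Sum>y\<in>Y. mpoly y) = Sq m 1 u"
  proof
    fix w
    have iff: "(\<exists>p\<in>{1..m}. u p = 1 \<and> w = u(p:=2)) \<longleftrightarrow> (w = u(j:=2) \<or> w \<in> Y)"
      using u1 SR unfolding Y_def by auto
    show "(mpoly (u(j:=2)) - (\<Sum>y\<in>Y. mpoly y)) w = Sq m 1 u w"
      unfolding mpoly_minus_ind[OF fY] Sq1_ind[OF uP ind_le1[of "insert j J", folded u_def]] iff
      using xY by auto
  qed
  show "mpoly (mk J j) = Sq m 1 (ind (insert j J)) + (\<Sum>i\<in>J. mpoly ((ind (insert j J))(i:=2)))"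
    using E unfolding x sY u_def[symmetric] by (simp only: diff_eq_eq)
  show "inadmissible m (mk J j)"
    unfolding inadmissible_def
  proof (intro conjI exI[of _ Y])
    show "mk J j \<in> Pmonos m" using mk_Pmonos[OF J(1) j(1)] .
    show "finite Y" by (rule fY)
    show "Y \<subseteq> Pmonos m" unfolding Y_def using J by (blast intro: upd_Pmonos[OF uP])
    show "\<forall>y\<in>Y. mless m y (mk J j)"
    proof
      fix y assume "y \<in> Y"
      then obtain i where i: "i \<in> J" "y = u(i:=2)" unfolding Y_def by blast
      have "mdeg m y = mdeg m (mk J j)"
        unfolding i(2) x u_def by (rule mdeg_upd2[OF SR]) (use i in auto)
      moreover have "omega m y = omega m (mk J j)"
        unfolding i(2) x u_def omega_upd[OF SR insertI1] omega_upd[OF SR insertI2[OF i(1)]] ..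
      moreover have "lexless y (mk J j)" unfolding lexless_def x i(2)
      proof (rule exI[of _ j], intro conjI allI impI)
        fix s assume "s < j" thus "(u(i:=2)) s = (u(j:=2)) s" using gt i(1) by auto
      next
        have "u j = 1" using u1[of j] by simp
        thus "(u(i:=2)) j < (u(j:=2)) j" using gt i(1) by auto
      qed
      ultimately show "mless m y (mk J j)" unfolding mless_def by simp
    qed
    show "mpoly (mk J j) - (\<Sum>y\<in>Y. mpoly y) \<in> Aplus m"
      unfolding x E by (rule Sq_in_Aplus) (use uP in auto)
  qed
qed




lemma arith_final: "(n + 3 choose 2) * (n + 3) - (n + 3) = (n + 1) * ((n::nat) + 4 choose 2)"
proof -
  define c3 where "c3 = n + 3 choose 2"
  have e: "n + 4 choose 2 = (n + 3) + c3"
    unfolding c3_def using binomial_Suc_Suc[of "n+3" 1] by (simp add: numeral_eq_Suc)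
  have ev: "even ((n + 3) * (n + 2))" by (cases "even n") auto
  have h: "2 * c3 = (n + 3) * (n + 2)"
    unfolding c3_def choose_two using ev by simp
  have "c3 * (n + 3) = (n + 1) * ((n + 3) + c3) + (n + 3)"
    using h by (simp add: algebra_simps)
  thus ?thesis unfolding e c3_def[symmetric] by simp
qed

lemma count_Cset:
  assumes k: "4 \<le> k"
  shows "card {(J, j). J \<subseteq> {1..<k} \<and> card J = k - 3 \<and> Min J \<le> j \<and> j < k} = (k - 3) * (k choose 2)"
proof -
  obtain n where n: "k = n + 4" using k by (metis add.commute le_add_diff_inverse)
  define A where "A = {J. J \<subseteq> {1..<k} \<and> card J = k - 3}"
  define P' where "P' = A \<times> {1..<k}"
  define Bad where "Bad = {(J, j). (J, j) \<in> P' \<and> j < Min J}"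
  have fA: "finite A" unfolding A_def by (rule finite_subset[of _ "Pow {1..<k}"]) auto
  have cA: "card A = (k - 1) choose (k - 3)"
    unfolding A_def using n_subsets[of "{1..<k}" "k-3"] by simp
  have fP': "finite P'" using fA P'_def by simp
  have cP': "card P' = ((k - 1) choose (k - 3)) * (k - 1)"
    unfolding P'_def using cA by (simp add: card_cartesian_product)
  have nonempty: "J \<noteq> {}" if "J \<in> A" for J
    using that k unfolding A_def by auto
  have eq: "{(J, j). J \<subseteq> {1..<k} \<and> card J = k - 3 \<and> Min J \<le> j \<and> j < k} = P' - Bad"
  proof (rule set_eqI, clarify)
    fix J j
    show "((J, j) \<in> {(J, j). J \<subseteq> {1..<k} \<and> card J = k - 3 \<and> Min J \<le> j \<and> j < k}) = ((J, j) \<in> P' - Bad)"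
    proof
      assume a: "(J, j) \<in> {(J, j). J \<subseteq> {1..<k} \<and> card J = k - 3 \<and> Min J \<le> j \<and> j < k}"
      hence JA: "J \<in> A" unfolding A_def by auto
      hence "J \<noteq> {}" by (rule nonempty)
      moreover have "finite J" using JA A_def finite_subset by auto
      ultimately have "Min J \<in> J" by (rule Min_in[rotated])
      hence "1 \<le> Min J" using JA A_def by auto
      thus "(J, j) \<in> P' - Bad" using a JA unfolding P'_def Bad_def by auto
    next
      assume "(J, j) \<in> P' - Bad"
      thus "(J, j) \<in> {(J, j). J \<subseteq> {1..<k} \<and> card J = k - 3 \<and> Min J \<le> j \<and> j < k}"
        unfolding P'_def Bad_def A_def by auto
    qed
  qed
  define B1 where "B1 = {J. J \<subseteq> {2..<k} \<and> card J = k - 3} \<times> {1::nat}"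
  have bad: "Bad = B1 \<union> {({3..<k}, 2)}"
  proof (rule set_eqI, clarify)
    fix J j
    show "((J, j) \<in> Bad) = ((J, j) \<in> B1 \<union> {({3..<k}, 2)})"
    proof
      assume "(J, j) \<in> Bad"
      hence b: "J \<subseteq> {1..<k}" "card J = k - 3" "1 \<le> j" "j < Min J"
        unfolding Bad_def P'_def A_def by auto
      have fJ: "finite J" using b(1) finite_subset by auto
      have sub: "J \<subseteq> {j+1..<k}"
      proof
        fix x assume "x \<in> J"
        hence "Min J \<le> x" using fJ by simp
        thus "x \<in> {j+1..<k}" using b(1,4) \<open>x \<in> J\<close> by auto
      qed
      hence "card J \<le> card {j+1..<k}" by (intro card_mono) simp_all
      hence j2: "j \<le> 2" using b(2) n by simp
      show "(J, j) \<in> B1 \<union> {({3..<k}, 2)}"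
      proof (cases "j = 1")
        case True thus ?thesis using sub b(2) unfolding B1_def by auto
      next
        case False
        hence "j = 2" using j2 b(3) by simp
        hence "J \<subseteq> {3..<k}" using sub by simp
        moreover have "card J = card {3..<k}" using b(2) by simp
        ultimately have "J = {3..<k}" using card_subset_eq[of "{3..<k}" J] by simp
        thus ?thesis using \<open>j = 2\<close> by simp
      qed
    next
      assume a: "(J, j) \<in> B1 \<union> {({3..<k}, 2)}"
      show "(J, j) \<in> Bad"
      proof (cases "(J, j) \<in> B1")
        case True
        hence b: "J \<subseteq> {2..<k}" "card J = k - 3" "j = 1" unfolding B1_def by auto
        have fJ: "finite J" using b(1) finite_subset by auto
        have "J \<noteq> {}" using b(2) k by auto
        hence "Min J \<in> J" using fJ by simp
        hence "1 < Min J" using b(1) by auto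
        thus ?thesis using b k unfolding Bad_def P'_def A_def by auto
      next
        case False
        hence "J = {3..<k}" "j = 2" using a by auto
        moreover have "Min {3..<k} = 3" using k by (simp add: Min_eq_iff)
        ultimately show ?thesis using k unfolding Bad_def P'_def A_def by auto
      qed
    qed
  qed
  have cB1: "card B1 = k - 2"
  proof -
    have "card {J. J \<subseteq> {2..<k} \<and> card J = k - 3} = (k - 2) choose (k - 3)"
      using n_subsets[of "{2..<k}" "k-3"] by simp
    also have "\<dots> = k - 2" using n by (simp add: binomial_symmetric[of "n+1" "n+2"])
    finally show ?thesis unfolding B1_def by (simp add: card_cartesian_product)
  qed
  have fB1: "finite B1" unfolding B1_def
    by (rule finite_cartesian_product[OF finite_subset[of _ "Pow {2..<k}"]]) auto
  have cBad: "card Bad = k - 1"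
  proof -
    have "({3..<k}, 2) \<notin> B1" unfolding B1_def by auto
    thus ?thesis unfolding bad using fB1 cB1 k by simp
  qed
  have BadP: "Bad \<subseteq> P'" unfolding Bad_def by auto
  have "card (P' - Bad) = card P' - card Bad"
    using card_Diff_subset[OF finite_subset[OF BadP fP'] BadP] .
  also have "\<dots> = ((n + 3) choose 2) * (n + 3) - (n + 3)"
  proof -
    have kk: "k - 1 = n + 3" "k - 3 = n + 1" using n by simp_all
    have "card P' = ((n + 3) choose (n + 1)) * (n + 3)" using cP' unfolding kk .
    also have "(n + 3) choose (n + 1) = (n + 3) choose 2"
      using binomial_symmetric[of "n+1" "n+3"] by simp
    finally have "card P' = ((n + 3) choose 2) * (n + 3)" .
    moreover have "card Bad = n + 3" using cBad kk by simp
    ultimately show ?thesis by simp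
  qed
  also have "\<dots> = (k - 3) * (k choose 2)" using arith_final n by simp
  finally show ?thesis unfolding eq .
qed




lemma (in vector_space) indep_union:
  assumes B: "independent B" and C: "independent C" "finite C" and I: "span B \<inter> span C \<subseteq> {0}"
  shows "independent (B \<union> C)"
proof -
  have "finite D \<Longrightarrow> D \<subseteq> C \<Longrightarrow> independent (B \<union> D)" for D
  proof (induction D rule: finite_induct)
    case empty show ?case using B by simp
  next
    case (insert c D)
    note 2 = insert
    have cspan: "c \<notin> span (B \<union> D)"
    proof
      assume "c \<in> span (B \<union> D)"
      then obtain s t where st: "c = s + t" "s \<in> span B" "t \<in> span D" unfolding span_Un by blast
      have tC: "t \<in> span C" using st(3) span_mono[of D C] 2 by auto
      have cC: "c \<in> span C" using 2 span_base by auto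
      have "s = c - t" using st(1) by simp
      hence "s \<in> span C" using tC cC span_diff by simp
      hence "s = 0" using I st(2) by auto
      hence "c \<in> span D" using st by simp
      moreover have "span D \<subseteq> span (C - {c})" using 2 by (intro span_mono) auto
      ultimately have "dependent C" unfolding dependent_def using 2 by auto
      thus False using C(1) by simp
    qed
    have "independent (insert c (B \<union> D))"
      by (rule independent_insertI[OF cspan]) (use 2 in auto)
    thus ?case by simp
  qed
  thus ?thesis using C(2) by simp
qed

lemma mpoly_apply: "mpoly a w = (if w = a then 1 else 0)"
  by (simp add: mpoly_def)

lemma mpoly_inj: "mpoly a = mpoly b \<Longrightarrow> a = b"
  by (metis mpoly_apply zero_neq_one)

lemma mpoly_nz: "mpoly a \<noteq> 0"
  by (metis mpoly_apply zero_fun_apply zero_neq_one)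

lemma supp_span: assumes "v \<in> V.span (mpoly ` A)" "w \<notin> A" shows "v w = 0"
proof -
  have "(\<Sum>y\<in>{w}. v y) = 0"
    by (rule kill_span[OF _ _ assms(1)]) (use assms(2) in \<open>auto simp: mpoly_apply\<close>)
  thus ?thesis by simp
qed

lemma indep_mpoly: "V.independent (mpoly ` A)"
  unfolding V.independent_explicit_finite_subsets
proof (intro allI impI ballI)
  fix S u v assume S: "S \<subseteq> mpoly ` A" "finite S" and sum0: "(\<Sum>v\<in>S. scl (u v) v) = 0" and v: "v \<in> S"
  obtain a where a: "v = mpoly a" using S v by auto
  have "(\<Sum>v'\<in>S. scl (u v') v') a = 0" using sum0 by simp
  moreover have "(\<Sum>v'\<in>S. scl (u v') v') a = (\<Sum>v'\<in>S. if v' = v then u v' else 0)"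
  proof -
    have pt: "scl (u v') v' a = (if v' = v then u v' else 0)" if vS: "v' \<in> S" for v'
    proof -
      obtain a' where a': "v' = mpoly a'" using S vS by auto
      show ?thesis using a a' mpoly_inj by (auto simp: scl_def mpoly_apply)
    qed
    have "(\<Sum>v'\<in>S. scl (u v') v') a = (\<Sum>v'\<in>S. scl (u v') v' a)" by (rule sum_fun_apply)
    also have "\<dots> = (\<Sum>v'\<in>S. if v' = v then u v' else 0)" by (rule sum.cong) (auto simp: pt)
    finally show ?thesis .
  qed
  ultimately show "u v = 0" using S(2) v by simp
qed

lemma finite_monos: "finite {y. y \<in> Pmonos m \<and> mdeg m y = d}"
proof -
  have "{y. y \<in> Pmonos m \<and> mdeg m y = d} \<subseteq> {f. \<forall>x. (x \<in> {1..m} \<longrightarrow> f x \<in> {0..d}) \<and> (x \<notin> {1..m} \<longrightarrow> f x = 0)}"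
  proof (rule subsetI)
    fix y assume "y \<in> {y. y \<in> Pmonos m \<and> mdeg m y = d}"
    hence y: "y \<in> Pmonos m" "mdeg m y = d" by auto
    show "y \<in> {f. \<forall>x. (x \<in> {1..m} \<longrightarrow> f x \<in> {0..d}) \<and> (x \<notin> {1..m} \<longrightarrow> f x = 0)}"
    unfolding mem_Collect_eq proof (intro allI conjI impI)
      fix x
      assume x: "x \<in> {1..m}"
      have "y x \<le> (\<Sum>l\<in>{1..m}. y l)" using x by (intro member_le_sum) auto
      thus "y x \<in> {0..d}" using y(2) unfolding mdeg_def by simp
    next
      fix x assume "x \<notin> {1..m}" thus "y x = 0" using Pmonos_out[OF y(1)] by simp
    qed
  qed
  moreover have "finite {f::mono. \<forall>x. (x \<in> {1..m} \<longrightarrow> f x \<in> {0..d}) \<and> (x \<notin> {1..m} \<longrightarrow> f x = 0)}"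
    by (rule finite_set_of_finite_funs) auto
  ultimately show ?thesis by (rule finite_subset)
qed




lemma wdeg_omega: assumes "4 \<le> k"
  shows "wdeg (\<lambda>t. if t = 0 then k - 3 else if t = 1 then 1 else 0) = k - 1"
proof -
  have e: "{t. (if t = 0 then k - 3 else if t = 1 then 1 else (0::nat)) \<noteq> 0} = {0, 1}" using assms by auto
  show ?thesis unfolding wdeg_def e using assms by simp
qed

lemma Cset_iff: "x \<in> Cset k \<longleftrightarrow> (\<exists>J j. J \<subseteq> {1..<k} \<and> card J = k - 3 \<and> Min J \<le> j \<and> j < k \<and> x = mk J j)"
  unfolding Cset_def mk_def by simp

lemma Cset_image: "Cset k = (\<lambda>(J, j). mk J j) ` {(J, j). J \<subseteq> {1..<k} \<and> card J = k - 3 \<and> Min J \<le> j \<and> j < k}"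
proof (rule set_eqI)
  fix x
  show "x \<in> Cset k \<longleftrightarrow> x \<in> (\<lambda>(J, j). mk J j) ` {(J, j). J \<subseteq> {1..<k} \<and> card J = k - 3 \<and> Min J \<le> j \<and> j < k}"
    unfolding Cset_iff image_iff
  proof
    assume "\<exists>J j. J \<subseteq> {1..<k} \<and> card J = k - 3 \<and> Min J \<le> j \<and> j < k \<and> x = mk J j"
    then obtain J j where Jj: "J \<subseteq> {1..<k}" "card J = k - 3" "Min J \<le> j" "j < k" "x = mk J j" by blast
    show "\<exists>p\<in>{(J, j). J \<subseteq> {1..<k} \<and> card J = k - 3 \<and> Min J \<le> j \<and> j < k}. x = (case p of (J, j) \<Rightarrow> mk J j)"
      using Jj by (intro bexI[of _ "(J, j)"]) simp_all
  next
    assume "\<exists>p\<in>{(J, j). J \<subseteq> {1..<k} \<and> card J = k - 3 \<and> Min J \<le> j \<and> j < k}. x = (case p of (J, j) \<Rightarrow> mk J j)"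
    then obtain p where p: "p \<in> {(J, j). J \<subseteq> {1..<k} \<and> card J = k - 3 \<and> Min J \<le> j \<and> j < k}" "x = (case p of (J, j) \<Rightarrow> mk J j)" by blast
    obtain J j where "p = (J, j)" by (cases p)
    hence "J \<subseteq> {1..<k} \<and> card J = k - 3 \<and> Min J \<le> j \<and> j < k \<and> x = mk J j" using p by simp
    thus "\<exists>J j. J \<subseteq> {1..<k} \<and> card J = k - 3 \<and> Min J \<le> j \<and> j < k \<and> x = mk J j" by (intro exI)
  qed
qed

theorem lemma3p8:
  fixes k :: nat
  assumes "4 \<le> k"
  shows "Cset k = {z. admissible (k - 1) z \<and>
                        omega (k - 1) z = (\<lambda>t. if t = 0 then k - 3 else if t = 1 then 1 else 0)}
         \<and> dimQP (k - 1) (\<lambda>t. if t = 0 then k - 3 else if t = 1 then 1 else 0)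
             = (k - 3) * (k choose 2)"
proof -
  define m where "m = k - 1"
  define w where "w = (\<lambda>t::nat. if t = 0 then k - 3 else if t = 1 then 1 else (0::nat))"
  have km: "{1..<k} = {1..m}" using assms m_def by auto
  have cpos: "k - 3 > 0" using assms by simp
  have CsetD: "\<exists>J j. J \<subseteq> {1..m} \<and> J \<noteq> {} \<and> card J = k - 3 \<and> Min J \<le> j \<and> j \<le> m \<and> x = mk J j"
    if xC: "x \<in> Cset k" for x
  proof -
    obtain J j where Jj: "J \<subseteq> {1..<k}" "card J = k - 3" "Min J \<le> j" "j < k" "x = mk J j"
      using Cset_iff[THEN iffD1, OF xC] by blast
    have "J \<noteq> {}" using Jj(2) cpos by auto
    moreover have "J \<subseteq> {1..m}" using Jj(1) km by simp
    moreover have "j \<le> m" using Jj(4) m_def by simp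
    ultimately show ?thesis using Jj(2,3,5) by blast
  qed
  have CsetI: "mk J j \<in> Cset k" if "J \<subseteq> {1..m}" "card J = k - 3" "Min J \<le> j" "j \<le> m" for J j
  proof -
    have "J \<subseteq> {1..<k}" using that(1) km by simp
    moreover have "j < k" using that(4) m_def assms by simp
    ultimately show ?thesis unfolding Cset_iff using that(2,3) by blast
  qed
  have wd: "wdeg w = k - 1" unfolding w_def using wdeg_omega[OF assms] .
  have Cprops: "admissible m x \<and> omega m x = w \<and> x \<in> Pmonos m \<and> mdeg m x = k - 1"
    if xC: "x \<in> Cset k" for x
  proof -
    obtain J j where Jj: "J \<subseteq> {1..m}" "J \<noteq> {}" "card J = k - 3" "Min J \<le> j" "j \<le> m" "x = mk J j"
      using CsetD[OF xC] by blast
    have fJ: "finite J" using Jj(1) finite_subset by blast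
    have "Min J \<in> J" using Min_in[OF fJ Jj(2)] .
    hence j1: "j \<in> {1..m}" using Jj by auto
    show ?thesis
      using Cset_admissible[OF Jj(1,2,4,5)] omega_mk[OF Jj(1) j1] mk_Pmonos[OF Jj(1) j1]
        mdeg_mk[OF Jj(1) j1] Jj(3,6) assms unfolding w_def by auto
  qed
  have part1: "Cset k = {z. admissible m z \<and> omega m z = w}"
  proof
    show "Cset k \<subseteq> {z. admissible m z \<and> omega m z = w}" using Cprops by auto
    show "{z. admissible m z \<and> omega m z = w} \<subseteq> Cset k"
    proof
      fix z assume "z \<in> {z. admissible m z \<and> omega m z = w}"
      hence z: "admissible m z" "omega m z = w" by auto
      have zP: "z \<in> Pmonos m" using z(1) unfolding admissible_def by simp
      obtain J j where Jj: "J \<subseteq> {1..m}" "j \<in> {1..m}" "card J = k - 3" "z = mk J j"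
        using mono_structure[OF zP z(2)[unfolded w_def]] by blast
      have Jne: "J \<noteq> {}" using Jj(3) cpos by auto
      show "z \<in> Cset k"
      proof (cases "Min J \<le> j")
        case True thus ?thesis using CsetI Jj by auto
      next
        case False
        hence "inadmissible m z" using nonC(2)[OF Jj(1) Jne Jj(2)] Jj(4) by simp
        thus ?thesis using z(1) unfolding admissible_def by simp
      qed
    qed
  qed
  define C where "C = mpoly ` Cset k"
  define S0 where "S0 = (Aplus m \<inter> Pw m w) \<union> Pw_minus m w"
  define PG where "PG = {mpoly y |y. y \<in> Pmonos m \<and> mdeg m y = wdeg w \<and> (lexless (omega m y) w \<or> omega m y = w)}"
  define MG where "MG = {mpoly y |y. y \<in> Pmonos m \<and> mdeg m y = wdeg w \<and> lexless (omega m y) w}"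
  have PwE: "Pw m w = V.span PG" unfolding Pw_def PG_def ..
  have PmE: "Pw_minus m w = V.span MG" unfolding Pw_minus_def MG_def ..
  have fPG: "finite PG"
  proof -
    have "PG \<subseteq> mpoly ` {y. y \<in> Pmonos m \<and> mdeg m y = wdeg w}" unfolding PG_def by auto
    thus ?thesis by (rule finite_subset[OF _ finite_imageI[OF finite_monos]])
  qed
  have subPw: "V.subspace (Pw m w)" unfolding PwE by simp
  have S0sub: "S0 \<subseteq> Pw m w"
  proof -
    have "MG \<subseteq> PG" unfolding MG_def PG_def by auto
    hence "Pw_minus m w \<subseteq> Pw m w" unfolding PmE PwE by (rule V.span_mono)
    thus ?thesis unfolding S0_def by auto
  qed
  have Csub: "C \<subseteq> Pw m w"
  proof
    fix g assume "g \<in> C"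
    then obtain x where x: "x \<in> Cset k" "g = mpoly x" unfolding C_def by auto
    have "g \<in> PG" unfolding PG_def using Cprops[OF x(1)] x(2) wd by auto
    thus "g \<in> Pw m w" unfolding PwE by (rule V.span_base)
  qed
  have spC: "V.span C \<subseteq> Pw m w" by (rule V.span_minimal[OF Csub subPw])
  have spanEq: "V.span (S0 \<union> C) = Pw m w"
  proof
    show "V.span (S0 \<union> C) \<subseteq> Pw m w" using S0sub Csub by (intro V.span_minimal[OF _ subPw]) auto
    show "Pw m w \<subseteq> V.span (S0 \<union> C)"
      unfolding PwE
    proof (rule V.span_minimal[OF _ V.subspace_span], rule subsetI)
      fix g assume gPG: "g \<in> PG"
      then obtain y where y: "g = mpoly y" "y \<in> Pmonos m" "mdeg m y = wdeg w"
          "lexless (omega m y) w \<or> omega m y = w" unfolding PG_def by auto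
      show "g \<in> V.span (S0 \<union> C)"
      proof (cases "lexless (omega m y) w")
        case True
        hence "g \<in> Pw_minus m w" using y unfolding PmE MG_def by (intro V.span_base) auto
        thus ?thesis unfolding S0_def by (intro V.span_base) auto
      next
        case False
        hence om: "omega m y = w" using y by auto
        obtain J j where Jj: "J \<subseteq> {1..m}" "j \<in> {1..m}" "card J = k - 3" "y = mk J j"
          using mono_structure[OF y(2) om[unfolded w_def]] by blast
        have Jne: "J \<noteq> {}" using Jj(3) cpos by auto
        have fJ: "finite J" using Jj(1) finite_subset by blast
        show ?thesis
        proof (cases "Min J \<le> j")
          case True
          hence "y \<in> Cset k" using CsetI Jj by auto
          thus ?thesis using y(1) unfolding C_def by (intro V.span_base) auto
        next
          case False
          hence jl: "j < Min J" by simp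
          have gt: "\<forall>i\<in>J. j < i" using jl fJ by (meson Min_le less_le_trans)
          define u where "u = ind (insert j J)"
          have dec: "mpoly y = Sq m 1 u + (\<Sum>i\<in>J. mpoly (u(i:=2)))"
            using nonC(1)[OF Jj(1) Jne Jj(2) jl] Jj(4) u_def by simp
          have inC: "mpoly (u(i:=2)) \<in> C" if iJ: "i \<in> J" for i
          proof -
            have ij: "i \<noteq> j" "j < i" using gt iJ by auto
            have e: "u(i:=2) = mk (insert j J - {i}) i" using upd_mk[of i "insert j J"] iJ u_def by simp
            have s: "insert j J - {i} \<subseteq> {1..m}" using Jj by auto
            have c: "card (insert j J - {i}) = k - 3"
            proof -
              have "j \<notin> J" using gt by auto
              hence "card (insert j J) = Suc (card J)" using fJ by simp
              moreover have "card (insert j J - {i}) = card (insert j J) - 1"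
                using iJ fJ by (simp add: card_Diff_singleton)
              ultimately show ?thesis using Jj(3) by simp
            qed
            have mn: "Min (insert j J - {i}) \<le> i"
            proof -
              have "j \<in> insert j J - {i}" using ij by auto
              hence "Min (insert j J - {i}) \<le> j" using fJ by (intro Min_le) auto
              thus ?thesis using ij by simp
            qed
            have "i \<le> m" using iJ Jj(1) by auto
            hence "u(i:=2) \<in> Cset k" unfolding e using CsetI[OF s c mn] by simp
            thus ?thesis unfolding C_def by simp
          qed
          have sumC: "(\<Sum>i\<in>J. mpoly (u(i:=2))) \<in> V.span C"
            by (intro V.span_sum V.span_base inC)
          have uP: "u \<in> Pmonos m" unfolding u_def using Jj by (intro ind_Pmonos) auto
          have sqA: "Sq m 1 u \<in> Aplus m" by (rule Sq_in_Aplus[OF _ uP]) simp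
          have sqP: "Sq m 1 u \<in> Pw m w"
          proof -
            have "Sq m 1 u = mpoly y - (\<Sum>i\<in>J. mpoly (u(i:=2)))" using dec by simp
            moreover have "mpoly y \<in> Pw m w" using gPG y(1) unfolding PwE by (simp add: V.span_base)
            moreover have "(\<Sum>i\<in>J. mpoly (u(i:=2))) \<in> Pw m w" using sumC spC by auto
            ultimately show ?thesis unfolding PwE using V.span_diff by simp
          qed
          have "Sq m 1 u \<in> V.span (S0 \<union> C)" using sqA sqP unfolding S0_def by (intro V.span_base) auto
          moreover have "(\<Sum>i\<in>J. mpoly (u(i:=2))) \<in> V.span (S0 \<union> C)"
            using sumC V.span_mono[of C "S0 \<union> C"] by auto
          ultimately show ?thesis using y(1) dec V.span_add by simp
        qed
      qed
    qed
  qed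
  have inter: "V.span S0 \<inter> V.span C \<subseteq> {0}"
  proof
    fix v assume v: "v \<in> V.span S0 \<inter> V.span C"
    have vC: "v \<in> V.span (mpoly ` Cset k)" using v C_def by simp
    have "v = 0"
    proof
      fix x
      show "v x = 0 x"
      proof (cases "x \<in> Cset k")
        case False thus ?thesis using supp_span[OF vC False] by simp
      next
        case True
        then obtain J j where Jj: "J \<subseteq> {1..m}" "J \<noteq> {}" "card J = k - 3" "Min J \<le> j" "j \<le> m" "x = mk J j"
          using CsetD by blast
        obtain W where W: "finite W" "x \<in> W" "\<forall>f\<in>Aplus m. (\<Sum>w\<in>W. f w) = 0"
          "\<forall>w'\<in>W - {x}. omega m w' = omega m x \<and> lexless x w' \<and> (\<exists>J' j'. w' = mk J' j' \<and> j' < Min J')"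
          using Cset_functional[OF Jj(1) Jj(2) Jj(4) Jj(5)] Jj(6) by blast
        have omx: "omega m x = w" using Cprops True by auto
        have gen: "\<forall>g\<in>S0. (\<Sum>w'\<in>W. g w') = 0"
        proof
          fix g assume "g \<in> S0"
          then consider "g \<in> Aplus m" | "g \<in> Pw_minus m w" unfolding S0_def by auto
          thus "(\<Sum>w'\<in>W. g w') = 0"
          proof cases
            case 1 thus ?thesis using W(3) by auto
          next
            case 2
            have "\<forall>h\<in>MG. (\<Sum>w'\<in>W. h w') = 0"
            proof
              fix h assume "h \<in> MG"
              then obtain y where y: "h = mpoly y" "lexless (omega m y) w" unfolding MG_def by auto
              have "y \<notin> W"
              proof
                assume "y \<in> W"
                hence "omega m y = w" using W(4) omx by (cases "y = x") auto
                thus False using y(2) lexless_irrefl by simp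
              qed
              thus "(\<Sum>w'\<in>W. h w') = 0" using y(1) W(1) by (simp add: mpoly_apply sum.delta)
            qed
            thus ?thesis using kill_span[OF W(1)] 2 PmE by auto
          qed
        qed
        have s0: "(\<Sum>w'\<in>W. v w') = 0" using kill_span[OF W(1) gen] v by auto
        have rest: "v w' = 0" if w': "w' \<in> W - {x}" for w'
        proof -
          obtain J' j' where J': "w' = mk J' j'" "j' < Min J'" using W(4) w' by blast
          have "w' \<notin> Cset k"
          proof
            assume "w' \<in> Cset k"
            then obtain J'' j'' where J'': "Min J'' \<le> j''" "w' = mk J'' j''" using CsetD by blast
            have "J'' = J'" "j'' = j'" using mk_inj[of J'' j'' J' j'] J'(1) J''(2) by simp_all
            thus False using J'(2) J''(1) by simp
          qed
          thus ?thesis using supp_span[OF vC] by simp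
        qed
        have "(\<Sum>w'\<in>W. v w') = v x + (\<Sum>w'\<in>W - {x}. v w')" using W(1,2) by (rule sum.remove)
        also have "(\<Sum>w'\<in>W - {x}. v w') = 0" using rest by simp
        finally show ?thesis using s0 by simp
      qed
    qed
    thus "v \<in> {0}" by simp
  qed
  have indC: "V.independent C" unfolding C_def by (rule indep_mpoly)
  have cardCs: "card (Cset k) = (k - 3) * (k choose 2)"
  proof -
    have inj: "inj_on (\<lambda>(J, j). mk J j) {(J, j). J \<subseteq> {1..<k} \<and> card J = k - 3 \<and> Min J \<le> j \<and> j < k}"
      by (rule inj_onI) (auto dest: mk_inj)
    show ?thesis unfolding Cset_image card_image[OF inj] using count_Cset[OF assms] .
  qed
  have fCs: "finite (Cset k)"
  proof (rule card_ge_0_finite)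
    have "0 < k choose 2" using assms by simp
    thus "0 < card (Cset k)" unfolding cardCs using cpos by simp
  qed
  have fC: "finite C" unfolding C_def using fCs by simp
  have cardC: "card C = card (Cset k)" unfolding C_def
    by (rule card_image) (auto intro: inj_onI mpoly_inj)
  obtain B where B: "B \<subseteq> V.span S0" "V.independent B" "V.span S0 \<subseteq> V.span B" "card B = V.dim (V.span S0)"
    using V.basis_exists by blast
  have spB: "V.span B = V.span S0"
  proof
    show "V.span B \<subseteq> V.span S0" using B(1) by (intro V.span_minimal) auto
    show "V.span S0 \<subseteq> V.span B" using B(3) .
  qed
  have indBC: "V.independent (B \<union> C)"
    by (rule V.indep_union[OF B(2) indC fC]) (use inter spB in auto)
  have PwBC: "Pw m w = V.span (B \<union> C)"
    unfolding spanEq[symmetric] V.span_Un spB ..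
  have fB: "finite B"
  proof -
    have "B \<subseteq> V.span PG" using B(1) S0sub PwE V.span_minimal[OF S0sub subPw] by auto
    thus ?thesis using V.independent_span_bound[OF fPG B(2)] by simp
  qed
  have disj: "B \<inter> C = {}"
  proof (rule ccontr)
    assume "B \<inter> C \<noteq> {}"
    then obtain b where b: "b \<in> B" "b \<in> C" by auto
    have "b \<in> V.span S0 \<inter> V.span C" using b B(1) V.span_base[of b C] by auto
    hence "b = 0" using inter by auto
    thus False using b(2) mpoly_nz unfolding C_def by auto
  qed
  have dimPw: "V.dim (Pw m w) = card B + card C"
    unfolding PwBC V.dim_span_eq_card_independent[OF indBC] using card_Un_disjoint[OF fB fC disj] .
  have dimres: "dimQP m w = (k - 3) * (k choose 2)"
    unfolding dimQP_def S0_def[symmetric] using dimPw B(4) cardC cardCs by simp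
  show ?thesis using part1 dimres unfolding m_def w_def by simp
qed


end
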